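(* Let $p$ be a binary word of length $l$ with exactly $2$ runs. For every $n\ge l$, every $p$-optimal binary word of length $n$ has exactly $2$ runs.
   Context: $c_p(w)$ is the number of occurrences of $p$ as a (not necessarily consecutive) subsequence of $w$. $M_{n,p}=\max\{c_p(w): w\in\{0,1\}^n\}$; a binary word $w$ of length $n$ is $p$-optimal if $c_p(w)=M_{n,p}$. A run is a maximal block of consecutive equal letters. *)

theory Defs
  imports Main
begin

text \<open>Binary words are lists of booleans (letter 0 = False, letter 1 = True).\<close>

definition occ :: "bool list \<Rightarrow> bool list \<Rightarrow> nat" where
  "occ p w = card {is. length is = length p \<and> sorted_wrt (<) is \<and>
                      (\<forall>j<length p. is ! j < length w \<and> w ! (is ! j) = p ! j)}"

definition maxocc :: "nat \<Rightarrow> bool list \<Rightarrow> nat" where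
  "maxocc n p = Max ((occ p) ` {w. length w = n})"

definition optimal :: "bool list \<Rightarrow> bool list \<Rightarrow> bool" where
  "optimal p w \<longleftrightarrow> occ p w = maxocc (length w) p"

definition runs :: "bool list \<Rightarrow> nat" where
  "runs w = length (remdups_adj w)"

end

theory Submission
  imports Defs
begin

lemma runs2_rep:
  assumes "a \<ge> 1" "b \<ge> 1"
  shows "runs (replicate a x @ replicate b (\<not>x)) = 2"
proof -
  obtain a' where a: "a = Suc a'" using assms by (cases a) auto
  obtain b' where b: "b = Suc b'" using assms by (cases b) auto
  have d: "dropWhile (\<lambda>y. y = x) (replicate a' x @ replicate b (\<not>x)) = replicate b (\<not>x)"
    by (induction a') (auto simp: b)
  have "remdups_adj (replicate a x @ replicate b (\<not>x)) = [x, \<not>x]"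
    unfolding a replicate_Suc append_Cons remdups_adj_Cons' d
    using assms by (simp add: remdups_adj_replicate)
  then show ?thesis by (simp add: runs_def)
qed

lemma runs2_shape:
  assumes "runs w = 2"
  shows "\<exists>x a b. a \<ge> 1 \<and> b \<ge> 1 \<and> w = replicate a x @ replicate b (\<not>x)"
  using assms
proof (induction w)
  case Nil then show ?case by (simp add: runs_def)
next
  case (Cons c w)
  show ?case
  proof (cases "w = []")
    case True then show ?thesis using Cons.prems by (simp add: runs_def)
  next
    case False
    then obtain d w' where w: "w = d # w'" by (cases w) auto
    show ?thesis
    proof (cases "d = c")
      case True
      have "runs w = 2" using Cons.prems by (simp add: runs_def w True)
      then obtain x a b where h: "a \<ge> 1" "b \<ge> 1" "w = replicate a x @ replicate b (\<not>x)"
        using Cons.IH by blast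
      then have "x = c" using w True by (cases a) auto
      then show ?thesis using h
        by (intro exI[of _ x] exI[of _ "Suc a"] exI[of _ b]) auto
    next
      case False
      have "length (remdups_adj w) = Suc 0" using Cons.prems False
        by (simp add: runs_def w)
      then have "w = replicate (length w) (hd w)" using remdups_adj_singleton_iff by blast
      then have "w = replicate (length w) d" using w by simp
      moreover have "d = (\<not>c)" using False by auto
      ultimately show ?thesis
        by (intro exI[of _ c] exI[of _ "1"] exI[of _ "length w"]) (auto simp: w)
    qed
  qed
qed

definition Occ :: "bool list \<Rightarrow> bool list \<Rightarrow> nat list set" where
  "Occ p w = {ws. length ws = length p \<and> sorted_wrt (<) ws \<and>
                      (\<forall>j<length p. ws ! j < length w \<and> w ! (ws ! j) = p ! j)}"

lemma occ_Occ: "occ p w = card (Occ p w)"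
  by (simp add: occ_def Occ_def)

lemma Occ_finite: "finite (Occ p w)"
proof (rule finite_subset)
  show "Occ p w \<subseteq> {xs. set xs \<subseteq> {..<length w} \<and> length xs = length p}"
    by (auto simp: Occ_def in_set_conv_nth)
  show "finite {xs. set xs \<subseteq> {..<length w} \<and> length xs = length p}"
    by (rule finite_lists_length_eq) simp
qed

definition Pos :: "bool list \<Rightarrow> bool \<Rightarrow> nat set" where
  "Pos w x = {i. i < length w \<and> w ! i = x}"

lemma Pos_finite: "finite (Pos w x)" by (simp add: Pos_def)

definition Pairs :: "nat \<Rightarrow> nat \<Rightarrow> bool \<Rightarrow> bool list \<Rightarrow> (nat set \<times> nat set) set" where
  "Pairs a b x w = {A. A \<subseteq> Pos w x \<and> card A = a} \<times> {B. B \<subseteq> Pos w (\<not>x) \<and> card B = b}"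

lemma card_Pairs: "card (Pairs a b x w) = (card (Pos w x) choose a) * (card (Pos w (\<not>x)) choose b)"
  by (simp add: Pairs_def card_cartesian_product n_subsets Pos_finite)

lemma Pairs_finite: "finite (Pairs a b x w)"
proof -
  have "finite {A. A \<subseteq> Pos w y \<and> card A = c}" for y c
    by (rule finite_subset[of _ "Pow (Pos w y)"]) (auto simp: Pos_finite)
  then show ?thesis unfolding Pairs_def by (intro finite_cartesian_product)
qed

definition pw :: "nat \<Rightarrow> nat \<Rightarrow> bool \<Rightarrow> bool list" where
  "pw a b x = replicate a x @ replicate b (\<not>x)"

lemma pw_len[simp]: "length (pw a b x) = a + b" by (simp add: pw_def)

lemma pw_nth: "j < a + b \<Longrightarrow> pw a b x ! j = (if j < a then x else \<not>x)"
  by (simp add: pw_def nth_append)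

definition fp :: "nat \<Rightarrow> nat list \<Rightarrow> nat set \<times> nat set" where
  "fp a ws = (set (take a ws), set (drop a ws))"

lemma fp_inj: "inj_on (fp a) (Occ p w)"
proof (rule inj_onI)
  fix ws js assume i: "ws \<in> Occ p w" and j: "js \<in> Occ p w" and e: "fp a ws = fp a js"
  have si: "sorted_wrt (<) ws" and sj: "sorted_wrt (<) js" using i j by (auto simp: Occ_def)
  have "take a ws = take a js"
    using e sorted_wrt_take[OF si] sorted_wrt_take[OF sj]
    by (intro sorted_distinct_set_unique) (auto simp: fp_def strict_sorted_iff)
  moreover have "drop a ws = drop a js"
    using e sorted_wrt_drop[OF si] sorted_wrt_drop[OF sj]
    by (intro sorted_distinct_set_unique) (auto simp: fp_def strict_sorted_iff)
  ultimately show "ws = js" by (metis append_take_drop_id)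
qed

lemma fp_maps:
  assumes "ws \<in> Occ (pw a b x) w"
  shows "fp a ws \<in> Pairs a b x w"
proof -
  have l: "length ws = a + b" and s: "sorted_wrt (<) ws"
    and h: "\<And>j. j < a + b \<Longrightarrow> ws ! j < length w \<and> w ! (ws ! j) = pw a b x ! j"
    using assms by (auto simp: Occ_def)
  have d: "distinct ws" using s strict_sorted_iff by blast
  have "set (take a ws) \<subseteq> Pos w x"
  proof
    fix k assume "k \<in> set (take a ws)"
    then obtain j where "j < length (take a ws)" "k = take a ws ! j" by (auto simp: in_set_conv_nth)
    then show "k \<in> Pos w x" using h[of j] l by (auto simp: Pos_def pw_nth)
  qed
  moreover have "set (drop a ws) \<subseteq> Pos w (\<not>x)"
  proof
    fix k assume "k \<in> set (drop a ws)"
    then obtain j where "j < length (drop a ws)" "k = drop a ws ! j" by (auto simp: in_set_conv_nth)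
    then show "k \<in> Pos w (\<not>x)" using h[of "a + j"] l by (auto simp: Pos_def pw_nth)
  qed
  moreover have "card (set (take a ws)) = a" "card (set (drop a ws)) = b"
    using d l by (auto simp: distinct_card)
  ultimately show ?thesis by (simp add: fp_def Pairs_def)
qed

lemma occ_le: "occ (pw a b x) w \<le> card (Pairs a b x w)"
  unfolding occ_Occ
  by (rule card_inj_on_le[OF fp_inj[of a]]) (auto intro: fp_maps Pairs_finite)

lemma occ_lt:
  assumes "i < j" "j < length w" "w ! i = (\<not>x)" "w ! j = x" "a \<ge> 1" "b \<ge> 1"
    "card (Pos w x) \<ge> a" "card (Pos w (\<not>x)) \<ge> b"
  shows "occ (pw a b x) w < card (Pairs a b x w)"
proof -
  have jX: "j \<in> Pos w x" and iY: "i \<in> Pos w (\<not>x)" using assms by (auto simp: Pos_def)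
  have "a - 1 \<le> card (Pos w x - {j})" using assms(7) jX Pos_finite by (simp add: card_Diff_singleton)
  then obtain A' where A': "A' \<subseteq> Pos w x - {j}" "card A' = a - 1" "finite A'"
    by (rule obtain_subset_with_card_n)
  have "b - 1 \<le> card (Pos w (\<not>x) - {i})" using assms(8) iY Pos_finite by (simp add: card_Diff_singleton)
  then obtain B' where B': "B' \<subseteq> Pos w (\<not>x) - {i}" "card B' = b - 1" "finite B'"
    by (rule obtain_subset_with_card_n)
  define A where "A = insert j A'"
  define B where "B = insert i B'"
  have "j \<notin> A'" "i \<notin> B'" using A' B' by auto
  then have "card A = a" "card B = b" using A' B' assms(5,6) by (auto simp: A_def B_def)
  then have AB: "(A, B) \<in> Pairs a b x w"
    using A' B' jX iY assms(5,6) by (auto simp: A_def B_def Pairs_def)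
  have notin: "(A, B) \<notin> fp a ` Occ (pw a b x) w"
  proof
    assume "(A, B) \<in> fp a ` Occ (pw a b x) w"
    then obtain ws where isO: "ws \<in> Occ (pw a b x) w" and e: "fp a ws = (A, B)" by auto
    have s: "sorted_wrt (<) ws" and l: "length ws = a + b" using isO by (auto simp: Occ_def)
    have "j \<in> set (take a ws)" "i \<in> set (drop a ws)" using e by (auto simp: fp_def A_def B_def)
    then obtain s1 s2 where "s1 < length (take a ws)" "j = take a ws ! s1"
       "s2 < length (drop a ws)" "i = drop a ws ! s2" by (auto simp: in_set_conv_nth)
    then have "j = ws ! s1" "i = ws ! (a + s2)" "s1 < a + s2" "a + s2 < length ws" by auto
    then have "j < i" using s by (simp add: sorted_wrt_iff_nth_less)
    then show False using assms(1) by simp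
  qed
  have "fp a ` Occ (pw a b x) w \<subset> Pairs a b x w"
    using fp_maps AB notin by blast
  then have "card (fp a ` Occ (pw a b x) w) < card (Pairs a b x w)"
    by (rule psubset_card_mono[OF Pairs_finite])
  then show ?thesis by (simp add: occ_Occ card_image[OF fp_inj])
qed

lemma Pos_pw1: "Pos (pw z k x) x = {..<z}"
  by (cases x) (auto simp: Pos_def pw_nth split: if_splits)

lemma Pos_pw2: "Pos (pw z k x) (\<not>x) = {z..<z+k}"
  by (cases x) (auto simp: Pos_def pw_nth split: if_splits)

lemma occ_ge: "card (Pairs a b x (pw z k x)) \<le> occ (pw a b x) (pw z k x)"
proof -
  define g where "g = (\<lambda>(A::nat set, B::nat set). sorted_list_of_set A @ sorted_list_of_set B)"
  have fin: "finite A \<and> finite B" if "(A, B) \<in> Pairs a b x (pw z k x)" for A B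
    using that by (auto simp: Pairs_def intro: finite_subset[OF _ Pos_finite])
  have inj: "inj_on g (Pairs a b x (pw z k x))"
  proof (rule inj_onI)
    fix u v assume u: "u \<in> Pairs a b x (pw z k x)" and v: "v \<in> Pairs a b x (pw z k x)" and e: "g u = g v"
    obtain A B where [simp]: "u = (A, B)" by (cases u)
    obtain C D where [simp]: "v = (C, D)" by (cases v)
    have c: "card A = a" "card C = a" using u v by (auto simp: Pairs_def)
    have f: "finite A" "finite B" "finite C" "finite D" using fin u v by auto
    have "sorted_list_of_set A = sorted_list_of_set C" "sorted_list_of_set B = sorted_list_of_set D"
      using e c f by (auto simp: g_def append_eq_append_conv)
    then show "u = v" using f by (metis \<open>u = (A, B)\<close> \<open>v = (C, D)\<close> sorted_list_of_set.set_sorted_key_list_of_set)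
  qed
  have maps: "g ` Pairs a b x (pw z k x) \<subseteq> Occ (pw a b x) (pw z k x)"
  proof
    fix t assume "t \<in> g ` Pairs a b x (pw z k x)"
    then obtain A B where AB: "(A, B) \<in> Pairs a b x (pw z k x)" and t: "t = g (A, B)" by auto
    have A: "A \<subseteq> {..<z}" "card A = a" and B: "B \<subseteq> {z..<z+k}" "card B = b"
      using AB by (auto simp: Pairs_def Pos_pw1 Pos_pw2)
    have f: "finite A" "finite B" using fin AB by auto
    let ?LA = "sorted_list_of_set A" and ?LB = "sorted_list_of_set B"
    have lA: "length ?LA = a" "set ?LA = A" and lB: "length ?LB = b" "set ?LB = B" using A B f by auto
    have "sorted_wrt (<) t"
      unfolding t g_def using A B f
      by (auto simp: sorted_wrt_append subset_iff intro: less_le_trans)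
    moreover have "t ! j < length (pw z k x) \<and> pw z k x ! (t ! j) = pw a b x ! j" if j: "j < a + b" for j
    proof (cases "j < a")
      case True
      then have "t ! j = ?LA ! j" by (simp add: t g_def nth_append lA A(2))
      moreover have "?LA ! j \<in> A" using True lA nth_mem by metis
      ultimately show ?thesis using A True j by (auto simp: pw_nth)
    next
      case False
      then have "t ! j = ?LB ! (j - a)" by (simp add: t g_def nth_append lA A(2))
      moreover have "?LB ! (j - a) \<in> B" using False j lB nth_mem
        by (metis add_diff_inverse_nat less_diff_conv2 not_le nat_le_linear add.commute)
      ultimately show ?thesis using B False j by (auto simp: pw_nth)
    qed
    moreover have "length t = a + b" by (simp add: t g_def lA lB A(2) B(2))
    ultimately show "t \<in> Occ (pw a b x) (pw z k x)" by (simp add: Occ_def)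
  qed
  show ?thesis unfolding occ_Occ
    by (rule card_inj_on_le[OF inj maps Occ_finite])
qed

theorem mainTheorem9:
  fixes p w :: "bool list" and n :: nat
  assumes "runs p = 2"
    and "n \<ge> length p"
    and "length w = n"
    and "optimal p w"
  shows "runs w = 2"
proof -
  obtain x a b where ab: "a \<ge> 1" "b \<ge> 1" and p: "p = pw a b x"
    using runs2_shape[OF assms(1)] by (auto simp: pw_def)
  have nl: "a + b \<le> n" using assms(2) p by simp
  define W where "W = {v :: bool list. length v = n}"
  have finW: "finite W"
    using finite_lists_length_eq[of "UNIV :: bool set" n] by (simp add: W_def)
  have ow: "occ p w = Max (occ p ` W)"
    using assms(3,4) by (simp add: optimal_def maxocc_def W_def)
  have ge: "occ p v \<le> occ p w" if "length v = n" for v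
    unfolding ow using finW that by (intro Max_ge) (auto simp: W_def)
  define u where "u = p @ replicate (n - (a + b)) False"
  have "[0..<a+b] \<in> Occ p u"
    using p by (auto simp: Occ_def u_def nth_append sorted_wrt_iff_nth_less)
  then have "occ p u \<ge> 1" unfolding occ_Occ using Occ_finite
    by (metis One_nat_def Suc_leI card_gt_0_iff empty_iff)
  moreover have "length u = n" using nl p by (simp add: u_def)
  ultimately have "occ p w \<ge> 1" using ge by fastforce
  then have "Occ p w \<noteq> {}" unfolding occ_Occ by auto
  then obtain ws where "ws \<in> Occ p w" by auto
  then have "fp a ws \<in> Pairs a b x w" using fp_maps p by simp
  then obtain A B where AB: "A \<subseteq> Pos w x" "card A = a" "B \<subseteq> Pos w (\<not>x)" "card B = b"
    by (auto simp: Pairs_def)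
  have cx: "card (Pos w x) \<ge> a" using AB card_mono[OF Pos_finite] by metis
  have cy: "card (Pos w (\<not>x)) \<ge> b" using AB card_mono[OF Pos_finite] by metis
  define z where "z = card (Pos w x)"
  define k where "k = card (Pos w (\<not>x))"
  have "Pos w x \<union> Pos w (\<not>x) = {..<n}" "Pos w x \<inter> Pos w (\<not>x) = {}"
    using assms(3) by (auto simp: Pos_def)
  then have zk: "z + k = n" unfolding z_def k_def
    by (metis card_Un_disjoint Pos_finite card_lessThan)
  have sorted: "\<not> (w ! i = (\<not>x) \<and> w ! j = x)" if "i < j" "j < n" for i j
  proof
    assume h: "w ! i = (\<not>x) \<and> w ! j = x"
    have "occ p w < card (Pairs a b x w)"
      unfolding p using occ_lt[of i j w x a b] that h ab cx cy assms(3) by simp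
    also have "\<dots> = card (Pairs a b x (pw z k x))"
      by (simp add: card_Pairs Pos_pw1 Pos_pw2 z_def k_def)
    also have "\<dots> \<le> occ p (pw z k x)" unfolding p by (rule occ_ge)
    also have "\<dots> \<le> occ p w" using ge zk by simp
    finally show False by simp
  qed
  have Ay: "Pos w (\<not>x) \<noteq> {}" using cy ab by auto
  define m where "m = Min (Pos w (\<not>x))"
  have m: "m \<in> Pos w (\<not>x)" unfolding m_def using Ay Pos_finite Min_in by blast
  have mle: "m \<le> i" if "i \<in> Pos w (\<not>x)" for i unfolding m_def using that Pos_finite by simp
  have mn: "m < n" "w ! m = (\<not>x)" using m assms(3) by (auto simp: Pos_def)
  have Ax: "Pos w x \<noteq> {}" using cx ab by auto
  then obtain j where j: "j < n" "w ! j = x" using assms(3) by (auto simp: Pos_def)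
  have "j < m"
  proof (rule ccontr)
    assume "\<not> j < m"
    then have "m < j" using j mn by (cases "m = j") auto
    then show False using sorted[of m j] j mn by simp
  qed
  have weq: "w = pw m (n - m) x"
  proof (rule nth_equalityI)
    show "length w = length (pw m (n - m) x)" using assms(3) mn by simp
    fix i assume i: "i < length w"
    show "w ! i = pw m (n - m) x ! i"
    proof (cases "i < m")
      case True
      have "w ! i = x"
      proof (rule ccontr)
        assume "w ! i \<noteq> x"
        then have "i \<in> Pos w (\<not>x)" using i by (auto simp: Pos_def)
        then show False using mle True by fastforce
      qed
      then show ?thesis using True mn by (simp add: pw_nth)
    next
      case False
      have "w ! i = (\<not>x)"
      proof (cases "i = m")
        case True then show ?thesis using mn by simp
      next
        case ne: False
        then have "m < i" using False by simp
        then show ?thesis using sorted[of m i] i mn assms(3) by auto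
      qed
      then show ?thesis using False mn i assms(3) by (simp add: pw_nth)
    qed
  qed
  show ?thesis unfolding weq pw_def
    by (rule runs2_rep) (use \<open>j < m\<close> mn in auto)
qed

end
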